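(* Let $A$ be a set of regular cardinals with no maximum such that $\sup(A)$ is a strong limit cardinal (regular or singular). Then $\operatorname{spec}(A)\setminus\sup(A)\subseteq\operatorname{spec}^*(A)$.
   Context: $\prod A$ is the set of functions $f$ on $A$ with $f(a)\in a$, ordered pointwise. $\operatorname{spec}(A)$ is the set of regular $\lambda$ for which some $\mathcal{F}\subseteq\prod A$ of size $\lambda$ has every $\lambda$-sized subset unbounded in $(\prod A,<)$. For $\mathcal{G}\subseteq\prod A$, $\operatorname{ub}(\mathcal{G})$ is the set of $a\in A$ such that $\{f(a):f\in\mathcal{G}\}$ is unbounded in $a$. $\operatorname{spec}^*(A)$ (the strong part of the Tukey spectrum) is the set of regular $\lambda$ such that there is $\mathcal{F}\subseteq\prod A$ of size $\lambda$ such that for every $\mathcal{F}_0\subseteq\mathcal{F}$ of size $\lambda$, $\operatorname{ub}(\mathcal{F}_0)$ is unbounded in $\sup(A)$. $\operatorname{spec}(A)\setminus\sup(A)$ denotes the members of $\operatorname{spec}(A)$ that are $\geq\sup(A)$. *)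

theory Defs
  imports Main "HOL-Library.FuncSet"
begin

text \<open>Ordinals are modelled as elements of an arbitrary well-ordered type 'o;
  the ordinal alpha is identified with its set of predecessors.\<close>

definition seg :: "'o::wellorder \<Rightarrow> 'o set" where
  "seg \<alpha> = {x. x < \<alpha>}"

definition is_cardinal :: "'o::wellorder \<Rightarrow> bool" where
  "is_cardinal \<kappa> \<longleftrightarrow> (\<forall>\<beta><\<kappa>. \<not> ( ordIso2 (card_of (seg \<beta>)) (card_of (seg \<kappa>)) ))"

definition regular :: "'o::wellorder \<Rightarrow> bool" where
  "regular \<kappa> \<longleftrightarrow> is_cardinal \<kappa> \<and> infinite (seg \<kappa>) \<and>
     (\<forall>X \<subseteq> seg \<kappa>. (\<forall>\<alpha><\<kappa>. \<exists>x\<in>X. \<alpha> \<le> x) \<longrightarrow> ordLeq2 (card_of (seg \<kappa>)) (card_of (X)) )"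

definition strong_limit :: "'o::wellorder \<Rightarrow> bool" where
  "strong_limit \<kappa> \<longleftrightarrow> is_cardinal \<kappa> \<and> infinite (seg \<kappa>) \<and>
     (\<forall>\<beta><\<kappa>. ordLess2 (card_of (Pow (seg \<beta>))) (card_of (seg \<kappa>)) )"

definition is_sup :: "'o::wellorder set \<Rightarrow> 'o \<Rightarrow> bool" where
  "is_sup A \<mu> \<longleftrightarrow> (\<forall>a\<in>A. a \<le> \<mu>) \<and> (\<forall>\<beta>. (\<forall>a\<in>A. a \<le> \<beta>) \<longrightarrow> \<mu> \<le> \<beta>)"

definition prodA :: "'o::wellorder set \<Rightarrow> ('o \<Rightarrow> 'o) set" where
  "prodA A = {f \<in> extensional A. \<forall>a\<in>A. f a < a}"

definition pw_less :: "'o::wellorder set \<Rightarrow> ('o \<Rightarrow> 'o) \<Rightarrow> ('o \<Rightarrow> 'o) \<Rightarrow> bool" where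
  "pw_less A f g \<longleftrightarrow> (\<forall>a\<in>A. f a < g a)"

definition bounded_in_prod :: "'o::wellorder set \<Rightarrow> ('o \<Rightarrow> 'o) set \<Rightarrow> bool" where
  "bounded_in_prod A G \<longleftrightarrow> (\<exists>g\<in>prodA A. \<forall>f\<in>G. pw_less A f g)"

definition spec :: "'o::wellorder set \<Rightarrow> 'o set" where
  "spec A = {la. regular la \<and> (\<exists>F \<subseteq> prodA A. ordIso2 (card_of (F)) (card_of (seg la)) \<and>
       (\<forall>F0 \<subseteq> F. ordIso2 (card_of (F0)) (card_of (seg la)) \<longrightarrow> \<not> bounded_in_prod A F0))}"

definition ub :: "'o::wellorder set \<Rightarrow> ('o \<Rightarrow> 'o) set \<Rightarrow> 'o set" where
  "ub A G = {a \<in> A. \<forall>\<beta><a. \<exists>f\<in>G. \<beta> \<le> f a}"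

definition spec_star :: "'o::wellorder set \<Rightarrow> 'o \<Rightarrow> 'o set" where
  "spec_star A \<mu> = {la. regular la \<and> (\<exists>F \<subseteq> prodA A. ordIso2 (card_of (F)) (card_of (seg la)) \<and>
       (\<forall>F0 \<subseteq> F. ordIso2 (card_of (F0)) (card_of (seg la)) \<longrightarrow> (\<forall>\<beta><\<mu>. \<exists>a\<in>ub A F0. \<beta> \<le> a)))}"

end

theory Submission imports Defs begin
unbundle cardinal_syntax

lemma regular_limit:
  fixes a x :: "'o::wellorder"
  assumes "regular a" "x < a"
  shows "\<exists>y. x < y \<and> y < a"
proof (rule ccontr)
  assume H: "\<not> ?thesis"
  have iff: "z < a \<longleftrightarrow> z = x \<or> z < x" for z
  proof
    assume za: "z < a"
    show "z = x \<or> z < x"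
    proof (rule ccontr)
      assume "\<not> (z = x \<or> z < x)"
      hence "x < z" by auto
      thus False using H za by blast
    qed
  next
    assume "z = x \<or> z < x"
    thus "z < a" using assms(2) by auto
  qed
  have eq: "seg a = seg x \<union> {x}" unfolding seg_def using iff by auto
  have inf: "infinite (seg a)" using assms(1) by (simp add: regular_def)
  hence infx: "infinite (seg x)" using eq by simp
  have "|seg x \<union> {x}| \<le>o |seg x <+> {x}|" by (rule card_of_Un_Plus_ordLeq)
  hence "|seg a| \<le>o |seg x <+> {x}|" by (simp only: eq)
  moreover have "|seg x <+> {x}| =o |seg x|"
  proof -
    have "seg x \<noteq> {}" using infx by auto
    hence "|{x}| \<le>o |seg x|" by (rule card_of_singl_ordLeq)
    thus ?thesis by (rule card_of_Plus_infinite1[OF infx])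
  qed
  ultimately have "|seg a| \<le>o |seg x|" by (rule ordLeq_ordIso_trans)
  moreover have "|seg x| \<le>o |seg a|"
  proof -
    have "seg x \<subseteq> seg a" unfolding eq by (rule Un_upper1)
    thus ?thesis by (rule card_of_mono1)
  qed
  ultimately have "|seg x| =o |seg a|" by (simp only: ordIso_iff_ordLeq)
  moreover have "is_cardinal a" using assms(1) by (simp add: regular_def)
  ultimately show False using assms(2) unfolding is_cardinal_def by blast
qed

lemma regular_union:
  fixes k :: "'o::wellorder"
  assumes reg: "regular k" and I: "|I| <o |seg k|" and X: "\<And>i. i \<in> I \<Longrightarrow> |X i| <o |seg k|"
  shows "|\<Union>i\<in>I. X i| <o |seg k|"
proof (rule ccontr)
  let ?U = "\<Union>i\<in>I. X i"
  assume nl: "\<not> ?thesis"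
  have le: "|seg k| \<le>o |?U|"
    using ordLess_or_ordLeq[OF card_of_Well_order card_of_Well_order, of ?U "seg k"] nl by simp
  have ne: "seg k \<noteq> {}" using reg by (auto simp add: regular_def)
  have regX: "\<And>Y. Y \<subseteq> seg k \<Longrightarrow> (\<forall>\<alpha><k. \<exists>x\<in>Y. \<alpha> \<le> x) \<Longrightarrow> |seg k| \<le>o |Y|"
    using reg unfolding regular_def by blast
  have "\<exists>e. e ` ?U = seg k" using card_of_ordLeq2[OF ne, of ?U] le by simp
  then obtain e where e: "e ` ?U = seg k" by (elim exE)
  have nc: "\<exists>\<alpha><k. \<forall>y\<in>e ` X i. y < \<alpha>" if i: "i \<in> I" for i
  proof (rule ccontr)
    assume "\<not> ?thesis"
    note nt = this
    have cof: "\<forall>\<alpha><k. \<exists>y\<in>e ` X i. \<alpha> \<le> y"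
    proof (intro allI impI)
      fix \<alpha> assume ak: "\<alpha> < k"
      show "\<exists>y\<in>e ` X i. \<alpha> \<le> y"
      proof (rule ccontr)
        assume "\<not> (\<exists>y\<in>e ` X i. \<alpha> \<le> y)"
        hence "\<forall>y\<in>e ` X i. y < \<alpha>" by (simp add: not_le)
        thus False using nt ak by blast
      qed
    qed
    have "e ` X i \<subseteq> e ` ?U" using i by (rule image_mono[OF UN_upper])
    hence sub: "e ` X i \<subseteq> seg k" by (simp only: e)
    have c1: "|seg k| \<le>o |e ` X i|" using regX[OF sub cof] .
    have c2: "|e ` X i| <o |seg k|" by (rule ordLeq_ordLess_trans[OF card_of_image X[OF i]])
    show False using not_ordLess_ordLeq[OF c2] c1 by (rule notE)
  qed
  hence "\<forall>i\<in>I. \<exists>\<alpha>. \<alpha> < k \<and> (\<forall>y\<in>e ` X i. y < \<alpha>)" by blast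
  from bchoice[OF this] obtain al where al0: "\<forall>i\<in>I. al i < k \<and> (\<forall>y\<in>e ` X i. y < al i)" by (elim exE)
  hence al: "\<And>i. i \<in> I \<Longrightarrow> al i < k \<and> (\<forall>y\<in>e ` X i. y < al i)" by blast
  have "\<exists>\<gamma><k. \<forall>y\<in>al ` I. y < \<gamma>"
  proof (rule ccontr)
    assume "\<not> ?thesis"
    note nt = this
    have cof: "\<forall>\<alpha><k. \<exists>y\<in>al ` I. \<alpha> \<le> y"
    proof (intro allI impI)
      fix \<alpha> assume ak: "\<alpha> < k"
      show "\<exists>y\<in>al ` I. \<alpha> \<le> y"
      proof (rule ccontr)
        assume "\<not> (\<exists>y\<in>al ` I. \<alpha> \<le> y)"
        hence "\<forall>y\<in>al ` I. y < \<alpha>" by (simp add: not_le)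
        thus False using nt ak by blast
      qed
    qed
    have sub: "al ` I \<subseteq> seg k" using al unfolding seg_def by auto
    have c1: "|seg k| \<le>o |al ` I|" using regX[OF sub cof] .
    have c2: "|al ` I| <o |seg k|" by (rule ordLeq_ordLess_trans[OF card_of_image I])
    show False using not_ordLess_ordLeq[OF c2] c1 by (rule notE)
  qed
  then obtain g where g: "g < k" "\<forall>i\<in>I. al i < g" by auto
  have "g \<in> seg k" using g(1) unfolding seg_def by simp
  hence "g \<in> e ` ?U" by (simp only: e)
  then obtain i u where iu: "i \<in> I" "u \<in> X i" "g = e u" by blast
  have "e u < al i" using al[OF iu(1)] iu(2) by blast
  moreover have "al i < g" using g(2) iu(1) by blast
  ultimately show False using iu(3) by simp
qed

lemma graph_card:
  fixes \<beta> :: "'o::wellorder"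
  assumes inf: "infinite (seg \<beta>)"
    and H: "\<And>h a. h \<in> H \<Longrightarrow> a \<in> D \<Longrightarrow> h a < \<beta>"
    and HD: "\<And>h. h \<in> H \<Longrightarrow> h \<in> extensional D"
    and D: "D \<subseteq> seg \<beta>"
  shows "|H| \<le>o |Pow (seg \<beta>)|"
proof -
  have "|seg \<beta> \<times> seg \<beta>| \<le>o |seg \<beta>|"
    using card_of_Times_same_infinite[OF inf] ordIso_iff_ordLeq by blast
  hence "\<exists>b. inj_on b (seg \<beta> \<times> seg \<beta>) \<and> b ` (seg \<beta> \<times> seg \<beta>) \<subseteq> seg \<beta>"
    using card_of_ordLeq[of "seg \<beta> \<times> seg \<beta>" "seg \<beta>"] by simp
  then obtain b where b: "inj_on b (seg \<beta> \<times> seg \<beta>)" "b ` (seg \<beta> \<times> seg \<beta>) \<subseteq> seg \<beta>"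
    by blast
  define G where "G h = b ` {(a, h a) | a. a \<in> D}" for h :: "'o \<Rightarrow> 'o"
  have gsub: "{(a, h a) | a. a \<in> D} \<subseteq> seg \<beta> \<times> seg \<beta>" if "h \<in> H" for h
    using H[OF that] D unfolding seg_def by auto
  have "inj_on G H"
  proof (rule inj_onI)
    fix h1 h2 assume h: "h1 \<in> H" "h2 \<in> H" "G h1 = G h2"
    hence "{(a, h1 a) | a. a \<in> D} = {(a, h2 a) | a. a \<in> D}"
      unfolding G_def using inj_on_image_eq_iff[OF b(1) gsub gsub] by blast
    hence "\<forall>a\<in>D. h1 a = h2 a" by blast
    thus "h1 = h2" by (intro extensionalityI[OF HD[OF h(1)] HD[OF h(2)]]) blast
  qed
  moreover have "G ` H \<subseteq> Pow (seg \<beta>)" unfolding G_def using b(2) gsub by blast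
  ultimately show ?thesis using card_of_ordLeq[of H "Pow (seg \<beta>)"] by blast
qed

theorem lemma5p3:
  fixes A :: "'o::wellorder set" and \<mu> :: 'o
  assumes "\<forall>a\<in>A. regular a"
    and "\<forall>a\<in>A. \<exists>b\<in>A. a < b"
    and "is_sup A \<mu>"
    and "strong_limit \<mu>"
  shows "{la \<in> spec A. \<mu> \<le> la} \<subseteq> spec_star A \<mu>"
proof
  fix la assume "la \<in> {la \<in> spec A. \<mu> \<le> la}"
  hence la: "la \<in> spec A" "\<mu> \<le> la" by auto
  have regla: "regular la" using la unfolding spec_def by auto
  obtain F where F: "F \<subseteq> prodA A" "|F| =o |seg la|"
    and P: "\<And>F0. F0 \<subseteq> F \<Longrightarrow> |F0| =o |seg la| \<Longrightarrow> \<not> bounded_in_prod A F0"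
    using la unfolding spec_def by blast
  have infmu: "infinite (seg \<mu>)" using assms(4) strong_limit_def by blast
  have "A \<noteq> {}"
  proof
    assume "A = {}"
    hence "\<mu> \<le> x" for x using assms(3) unfolding is_sup_def by blast
    hence "seg \<mu> = {}" unfolding seg_def by (auto simp: not_less)
    thus False using infmu by simp
  qed
  then obtain a0 where a0: "a0 \<in> A" by blast
  have a0mu: "a0 < \<mu>" using assms(2,3) a0 unfolding is_sup_def by (meson less_le_trans)
  have infa0: "infinite (seg a0)" using assms(1) a0 regular_def by blast
  have "\<forall>F0 \<subseteq> F. |F0| =o |seg la| \<longrightarrow> (\<forall>\<beta><\<mu>. \<exists>a\<in>ub A F0. \<beta> \<le> a)"
  proof (intro allI impI)
    fix F0 \<beta>0 assume F0: "F0 \<subseteq> F" "|F0| =o |seg la|" and b0: "\<beta>0 < \<mu>"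
    show "\<exists>a\<in>ub A F0. \<beta>0 \<le> a"
    proof (rule ccontr)
      assume "\<not> ?thesis"
      hence hb: "\<And>a. a \<in> ub A F0 \<Longrightarrow> a < \<beta>0" by (auto simp: not_le)
      define \<beta> where "\<beta> = max \<beta>0 a0"
      have bmu: "\<beta> < \<mu>" using b0 a0mu \<beta>_def by simp
      have infb: "infinite (seg \<beta>)"
      proof -
        have "seg a0 \<subseteq> seg \<beta>" unfolding seg_def \<beta>_def by (auto simp: less_max_iff_disj)
        thus ?thesis using infa0 finite_subset by blast
      qed
      have F0p: "F0 \<subseteq> prodA A" using F0 F by blast
      define \<phi> where "\<phi> f = restrict f (A \<inter> seg \<beta>)" for f :: "'o \<Rightarrow> 'o"
      define H where "H = \<phi> ` F0"
      have "|H| \<le>o |Pow (seg \<beta>)|"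
      proof (rule graph_card[OF infb, of H "A \<inter> seg \<beta>"])
        fix h a assume "h \<in> H" "a \<in> A \<inter> seg \<beta>"
        then obtain f where "f \<in> F0" "h = \<phi> f" "a \<in> A" "a < \<beta>" unfolding H_def seg_def by auto
        hence "h a = f a" "f a < a" using F0p unfolding prodA_def \<phi>_def seg_def by auto
        thus "h a < \<beta>" using \<open>a < \<beta>\<close> by simp
      qed (auto simp: H_def \<phi>_def)
      also have "|Pow (seg \<beta>)| <o |seg \<mu>|" using assms(4) bmu strong_limit_def by blast
      also have "|seg \<mu>| \<le>o |seg la|"
      proof -
        have "seg \<mu> \<subseteq> seg la" using la(2) unfolding seg_def by auto
        thus ?thesis by (rule card_of_mono1)
      qed
      finally have Hsmall: "|H| <o |seg la|" .
      define X where "X h = {f \<in> F0. \<phi> f = h}" for h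
      have "F0 = (\<Union>h\<in>H. X h)" unfolding X_def H_def by auto
      have "\<exists>h\<in>H. \<not> |X h| <o |seg la|"
      proof (rule ccontr)
        assume "\<not> ?thesis"
        hence "|\<Union>h\<in>H. X h| <o |seg la|" using regular_union[OF regla Hsmall] by blast
        hence "|F0| <o |seg la|" using \<open>F0 = (\<Union>h\<in>H. X h)\<close> by simp
        thus False using F0(2) not_ordLess_ordIso by blast
      qed
      then obtain h where h: "h \<in> H" "\<not> |X h| <o |seg la|" by blast
      have "|X h| \<le>o |seg la|"
        using card_of_mono1[of "X h" F0] F0(2) ordLeq_ordIso_trans unfolding X_def by blast
      hence Xh: "|X h| =o |seg la|" using h(2) ordLeq_iff_ordLess_or_ordIso by blast
      obtain f1 where f1: "f1 \<in> F0" "h = \<phi> f1" using h(1) H_def by blast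
      have XF: "X h \<subseteq> F" using F0 X_def by auto
      define g where "g = restrict (\<lambda>a. if a < \<beta> then (SOME y. f1 a < y \<and> y < a)
          else (SOME y. y < a \<and> (\<forall>f\<in>F0. f a < y))) A"
      have g1: "f1 a < g a \<and> g a < a" if "a \<in> A" "a < \<beta>" for a
      proof -
        have "f1 a < a" using f1 F0p that unfolding prodA_def by blast
        hence ex: "\<exists>y. f1 a < y \<and> y < a" using regular_limit assms(1) that by blast
        have "g a = (SOME y. f1 a < y \<and> y < a)" unfolding g_def using that by simp
        thus ?thesis using someI_ex[OF ex] by simp
      qed
      have g2: "g a < a \<and> (\<forall>f\<in>F0. f a < g a)" if "a \<in> A" "\<not> a < \<beta>" for a
      proof -
        have "\<beta>0 \<le> a" using that \<beta>_def by (auto simp: not_less)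
        hence "a \<notin> ub A F0" using hb leD by blast
        hence ex: "\<exists>y. y < a \<and> (\<forall>f\<in>F0. f a < y)" using that unfolding ub_def by (auto simp: not_le)
        have "g a = (SOME y. y < a \<and> (\<forall>f\<in>F0. f a < y))" unfolding g_def using that by simp
        thus ?thesis using someI_ex[OF ex] by simp
      qed
      have "g \<in> prodA A" unfolding prodA_def using g1 g2 by (auto simp: g_def)
      moreover have "\<forall>f\<in>X h. pw_less A f g"
        unfolding pw_less_def
      proof (intro ballI)
        fix f a assume f: "f \<in> X h" and a: "a \<in> A"
        show "f a < g a"
        proof (cases "a < \<beta>")
          case True
          have "\<phi> f a = \<phi> f1 a" using f f1 X_def by simp
          hence "f a = f1 a" using True a unfolding \<phi>_def seg_def by simp
          thus ?thesis using g1 True a by simp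
        next
          case False thus ?thesis using g2 a f X_def by blast
        qed
      qed
      ultimately have "bounded_in_prod A (X h)" unfolding bounded_in_prod_def by blast
      thus False using P[OF XF Xh] by blast
    qed
  qed
  thus "la \<in> spec_star A \<mu>" unfolding spec_star_def using regla F by blast
qed
end
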